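(* Let $f,g\colon\mathbb{R}^3\to\mathbb{R}$ be globally Lipschitz with $|f|,|g|<M$, and consider for $\varepsilon>0$ the system \[ \dot x = f(x,y,z),\qquad \dot y = g(x,y,z),\qquad \varepsilon\dot z = x+|z|. \] Assume the setting described in the context, let $\alpha>0$ be sufficiently small, $(x_0,y_0)\in\Pi(\alpha)$, and let $(x_\varepsilon(t),y_\varepsilon(t),z_\varepsilon(t))$ be the solution with $x(\tau)=x_0$, $y(\tau)=y_0$, $z(\tau)=0$. Put $T=-T_a+T_r$, $\omega=\varepsilon\ln(T/\varepsilon)$, \[ \hat t=\min\bigl(\{T_r\}\cup\{t>\tau: z_\varepsilon(t)=0\}\bigr),\qquad t_1=\tau+\varepsilon\ln\Bigl(-\frac{x_0}{M\varepsilon}\Bigr). \] Then for all sufficiently small $\varepsilon>0$: $t_1<\tau+\omega$, $\hat t>t_1$, and $|z_\varepsilon(t)-x_\varepsilon(t)|<2M\varepsilon$ for $t_1\le t\le\hat t$.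
   Context: Setting: $f(0,0,0)=0$, $g(0,0,0)>0$, $y f(0,y,0)<0$ for $y\ne0$. Let $f_a(x,y)=f(x,y,x)$, $g_a(x,y)=g(x,y,x)$, $f_r(x,y)=f(x,y,-x)$, $g_r(x,y)=g(x,y,-x)$. Let $w_a^*(t)=(x_a^*,y_a^* )$ solve $\dot x=f_a,\dot y=g_a$ and $w_r^*(t)=(x_r^*,y_r^* )$ solve $\dot x=f_r,\dot y=g_r$, both with $x(0)=y(0)=0$. $T_a<0<T_r$ are such that $x_a^*(t)<0$ on $(T_a,0)$ and $x_r^*(t)<0$ on $(0,T_r)$. There are $T_a<\tau<0<\sigma<T_r$ with $w_a^*(\tau)=w_r^*(\sigma)=(x^*,y^* )$, and $A=f_ag_r-f_rg_a$ evaluated at $(x^*,y^* )$ is nonzero. Near $(x^*,y^* )$ define $u(x,y)$ as the (small) time such that the solution of $\dot x=f_a,\dot y=g_a$ starting at $(x,y)$ at time $0$ lies on the curve $\{w_r^*(t)\}$ at time $u(x,y)$, and $v(x,y)$ as the (small) time such that the solution of $\dot x=f_r,\dot y=g_r$ starting at $(x,y)$ at time $0$ lies on the curve $\{w_a^*(t)\}$ at time $v(x,y)$ (well defined near $(x^*,y^* )$ by transversality). For small $\alpha>0$, $\Pi(\alpha)=\{(x,y): |u(x,y)|<\alpha/2,\ |v(x,y)|<\alpha/2\}$. *)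

theory Defs
  imports "HOL-Analysis.Analysis"
begin

definition is_sol2 :: "(real \<Rightarrow> real \<Rightarrow> real) \<Rightarrow> (real \<Rightarrow> real \<Rightarrow> real) \<Rightarrow> (real \<Rightarrow> real \<times> real) \<Rightarrow> bool" where
  "is_sol2 F G \<phi> \<longleftrightarrow>
     (\<forall>t. (\<phi> has_vector_derivative (F (fst (\<phi> t)) (snd (\<phi> t)), G (fst (\<phi> t)) (snd (\<phi> t)))) (at t))"

text \<open>The flow: value at time s of the (unique, for Lipschitz F G) global solution with
  initial value p at time 0.\<close>
definition flow2 :: "(real \<Rightarrow> real \<Rightarrow> real) \<Rightarrow> (real \<Rightarrow> real \<Rightarrow> real) \<Rightarrow> real \<times> real \<Rightarrow> real \<Rightarrow> real \<times> real" where
  "flow2 F G p s = (THE \<phi>. \<phi> 0 = p \<and> is_sol2 F G \<phi>) s"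

end

theory Submission
  imports Defs "HOL-Analysis.Analysis"
begin


lemma eps_main:
  fixes f :: "real \<Rightarrow> real \<Rightarrow> real \<Rightarrow> real"
    and M \<tau> Tr x0 \<epsilon> :: real and xe ye ze :: "real \<Rightarrow> real"
  assumes bd: "\<forall>x y z. \<bar>f x y z\<bar> < M"
    and x0: "x0 < 0" and tauTr: "\<tau> < Tr"
    and eps: "0 < \<epsilon>" "\<epsilon> \<le> (min (-x0/M) (Tr - \<tau>))^2 / (16 * (-x0/M))"
    and dx: "\<And>t. (xe has_real_derivative f (xe t) (ye t) (ze t)) (at t)"
    and dz: "\<And>t. (ze has_real_derivative (xe t + \<bar>ze t\<bar>) / \<epsilon>) (at t)"
    and init: "xe \<tau> = x0" "ze \<tau> = 0"
  shows "Inf ({Tr} \<union> {t. t > \<tau> \<and> ze t = 0}) > \<tau> + \<epsilon> * ln (- x0 / (M * \<epsilon>)) \<and>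
     (\<forall>t. \<tau> + \<epsilon> * ln (- x0 / (M * \<epsilon>)) \<le> t \<and> t \<le> Inf ({Tr} \<union> {t. t > \<tau> \<and> ze t = 0})
        \<longrightarrow> \<bar>ze t - xe t\<bar> < 2 * M * \<epsilon>)"
proof -
  define a where "a = - x0"
  have a: "0 < a" using x0 a_def by simp
  have M: "0 < M" using bd by (metis abs_ge_zero le_less_trans)
  define k where "k = a / M"
  have k: "0 < k" using a M k_def by simp
  define m where "m = min k (Tr - \<tau>)"
  have m: "0 < m" "m \<le> k" "m \<le> Tr - \<tau>" using k tauTr m_def by auto
  have epsm: "\<epsilon> \<le> m^2 / (16*k)" using eps(2) unfolding m_def k_def a_def by simp
  have ke: "k * \<epsilon> \<le> m^2/16" using epsm k by (simp add: field_simps)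
  have e3: "3 * \<epsilon> \<le> 3 * m / 16"
  proof -
    have "m^2/(16*k) \<le> m/16" using m k by (simp add: field_simps power2_eq_square mult_left_mono)
    then show ?thesis using epsm by simp
  qed
  define r1 where "r1 = \<epsilon> * ln (k / \<epsilon>)"
  have t1eq: "\<tau> + \<epsilon> * ln (- x0 / (M * \<epsilon>)) = \<tau> + r1"
    unfolding r1_def k_def a_def using M eps by (simp add: field_simps)
  have epsk: "\<epsilon> < k" using e3 m eps by linarith
  have r1pos: "0 < r1" unfolding r1_def using epsk eps by simp
  have r1bd: "r1 < m/2"
  proof -
    have y: "0 < k/\<epsilon>" using k eps by simp
    have "ln (sqrt (k/\<epsilon>)) \<le> sqrt (k/\<epsilon>) - 1" using y by (intro ln_le_minus_one) simp
    moreover have "ln (sqrt (k/\<epsilon>)) = ln (k/\<epsilon>) / 2" using y by (simp add: ln_sqrt)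
    ultimately have "ln (k/\<epsilon>) < 2 * sqrt (k/\<epsilon>)" by linarith
    then have "r1 < \<epsilon> * (2 * sqrt (k/\<epsilon>))" unfolding r1_def using eps by simp
    also have "\<epsilon> * (2 * sqrt (k/\<epsilon>)) = 2 * sqrt (k * \<epsilon>)"
    proof -
      have "\<epsilon> = sqrt (\<epsilon>*\<epsilon>)" using eps by simp
      then have "\<epsilon> * sqrt (k/\<epsilon>) = sqrt (\<epsilon>*\<epsilon>*(k/\<epsilon>))" by (metis real_sqrt_mult)
      also have "\<epsilon>*\<epsilon>*(k/\<epsilon>) = k*\<epsilon>" using eps by simp
      finally show ?thesis by simp
    qed
    also have "sqrt (k*\<epsilon>) \<le> sqrt (m^2/16)" using ke by simp
    also have "sqrt (m^2/16) = m/4" using m by (simp add: real_sqrt_divide)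
    finally show ?thesis by simp
  qed
  have key1: "M * (r1 + 3*\<epsilon>) < a"
  proof -
    have "r1 + 3*\<epsilon> < m" using r1bd e3 m by linarith
    then have "M * (r1 + 3*\<epsilon>) < M * m" using M by simp
    also have "\<dots> \<le> M * k" using m M by simp
    finally show ?thesis using M k_def by simp
  qed
  have key2: "\<tau> + r1 + \<epsilon> < Tr" using r1bd e3 m eps by linarith
  define t2 where "t2 = \<tau> + r1 + \<epsilon>"
  have cz: "continuous_on S ze" for S
    using dz by (meson DERIV_isCont continuous_at_imp_continuous_on)
  have cx: "continuous_on S xe" for S
    using dx by (meson DERIV_isCont continuous_at_imp_continuous_on)
  have est: "\<bar>exp ((s-\<tau>)/\<epsilon>) * (ze s - xe s) - a\<bar> < M * \<epsilon> * (exp ((s-\<tau>)/\<epsilon>) - 1)"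
    if s: "\<tau> < s" and zle: "\<And>q. \<tau> \<le> q \<Longrightarrow> q \<le> s \<Longrightarrow> ze q \<le> 0" for s
  proof -
    have der: "((\<lambda>q. exp ((q-\<tau>)/\<epsilon>) * (ze q - xe q) + c * (M*\<epsilon>) * exp ((q-\<tau>)/\<epsilon>)) has_real_derivative
         exp ((q-\<tau>)/\<epsilon>) * (c * M - f (xe q) (ye q) (ze q))) (at q)"
      if q: "\<tau> \<le> q" "q \<le> s" for q c
    proof -
      have zq: "\<bar>ze q\<bar> = - ze q" using zle[OF q] by simp
      have "((\<lambda>q. exp ((q-\<tau>)/\<epsilon>) * (ze q - xe q) + c * (M*\<epsilon>) * exp ((q-\<tau>)/\<epsilon>)) has_real_derivative
         exp ((q-\<tau>)/\<epsilon>) * (1/\<epsilon>) * (ze q - xe q) + ((xe q + \<bar>ze q\<bar>) / \<epsilon> - f (xe q) (ye q) (ze q)) * exp ((q-\<tau>)/\<epsilon>)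
         + c * (M*\<epsilon>) * (exp ((q-\<tau>)/\<epsilon>) * (1/\<epsilon>))) (at q)"
      proof -
        have dE: "((\<lambda>q. exp ((q-\<tau>)/\<epsilon>)) has_real_derivative exp((q-\<tau>)/\<epsilon>) * (1/\<epsilon>)) (at q)"
          using eps by (auto intro!: derivative_eq_intros)
        have dw: "((\<lambda>q. ze q - xe q) has_real_derivative (xe q + \<bar>ze q\<bar>) / \<epsilon> - f (xe q) (ye q) (ze q)) (at q)"
          by (intro DERIV_diff dz dx)
        show ?thesis
          by (rule DERIV_add[OF DERIV_mult[OF dE dw] DERIV_cmult[OF dE]])
      qed
      moreover have "exp ((q-\<tau>)/\<epsilon>) * (1/\<epsilon>) * (ze q - xe q) + ((xe q + \<bar>ze q\<bar>) / \<epsilon> - f (xe q) (ye q) (ze q)) * exp ((q-\<tau>)/\<epsilon>)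
         + c * (M*\<epsilon>) * (exp ((q-\<tau>)/\<epsilon>) * (1/\<epsilon>)) = exp ((q-\<tau>)/\<epsilon>) * (c * M - f (xe q) (ye q) (ze q))"
        using eps zq by (simp add: field_simps)
      ultimately show ?thesis by simp
    qed
    have up: "exp ((\<tau>-\<tau>)/\<epsilon>) * (ze \<tau> - xe \<tau>) + 1 * (M*\<epsilon>) * exp ((\<tau>-\<tau>)/\<epsilon>)
           < exp ((s-\<tau>)/\<epsilon>) * (ze s - xe s) + 1 * (M*\<epsilon>) * exp ((s-\<tau>)/\<epsilon>)"
    proof (rule DERIV_pos_imp_increasing[OF s])
      fix q assume "\<tau> \<le> q" "q \<le> s"
      moreover have "0 < exp ((q-\<tau>)/\<epsilon>) * (1 * M - f (xe q) (ye q) (ze q))"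
        using bd by (simp add: abs_less_iff)
      ultimately show "\<exists>y. ((\<lambda>q. exp ((q-\<tau>)/\<epsilon>) * (ze q - xe q) + 1 * (M*\<epsilon>) * exp ((q-\<tau>)/\<epsilon>)) has_real_derivative y) (at q) \<and> 0 < y"
        using der by blast
    qed
    have down: "exp ((s-\<tau>)/\<epsilon>) * (ze s - xe s) + (-1) * (M*\<epsilon>) * exp ((s-\<tau>)/\<epsilon>)
           < exp ((\<tau>-\<tau>)/\<epsilon>) * (ze \<tau> - xe \<tau>) + (-1) * (M*\<epsilon>) * exp ((\<tau>-\<tau>)/\<epsilon>)"
    proof -
      have "(\<lambda>q. - (exp ((q-\<tau>)/\<epsilon>) * (ze q - xe q) + (-1) * (M*\<epsilon>) * exp ((q-\<tau>)/\<epsilon>))) \<tau>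
          < (\<lambda>q. - (exp ((q-\<tau>)/\<epsilon>) * (ze q - xe q) + (-1) * (M*\<epsilon>) * exp ((q-\<tau>)/\<epsilon>))) s"
      proof (rule DERIV_pos_imp_increasing[OF s])
        fix q assume q: "\<tau> \<le> q" "q \<le> s"
        have "0 < M + f (xe q) (ye q) (ze q)" using bd[rule_format, of "xe q" "ye q" "ze q"] by (simp add: abs_less_iff)
        then have "0 < exp ((q-\<tau>)/\<epsilon>) * (M + f (xe q) (ye q) (ze q))" by simp
        moreover have "((\<lambda>q. - (exp ((q-\<tau>)/\<epsilon>) * (ze q - xe q) + (-1) * (M*\<epsilon>) * exp ((q-\<tau>)/\<epsilon>))) has_real_derivative
            - (exp ((q-\<tau>)/\<epsilon>) * ((-1) * M - f (xe q) (ye q) (ze q)))) (at q)"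
          using der[OF q, of "-1"] by (intro DERIV_minus)
        ultimately show "\<exists>y. ((\<lambda>q. - (exp ((q-\<tau>)/\<epsilon>) * (ze q - xe q) + (-1) * (M*\<epsilon>) * exp ((q-\<tau>)/\<epsilon>))) has_real_derivative y) (at q) \<and> 0 < y"
          by (intro exI[of _ "- (exp ((q-\<tau>)/\<epsilon>) * ((-1) * M - f (xe q) (ye q) (ze q)))"]) (simp add: algebra_simps)
      qed
      then show ?thesis by simp
    qed
    show ?thesis using up down init a_def by (simp add: abs_less_iff algebra_simps)
  qed
  have zneg1: "ze s < 0" if s: "\<tau> < s" "s \<le> t2" and zle: "\<And>q. \<tau> \<le> q \<Longrightarrow> q \<le> s \<Longrightarrow> ze q \<le> 0" for s
  proof -
    define r where "r = s - \<tau>"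
    define e where "e = exp (r/\<epsilon>)"
    have r: "0 < r" "r \<le> r1 + \<epsilon>" using s unfolding r_def t2_def by auto
    have e1: "e - 1 \<ge> r/\<epsilon>" unfolding e_def using exp_ge_add_one_self[of "r/\<epsilon>"] by linarith
    have epos: "e > 0" unfolding e_def by simp
    have E: "e * (ze s - xe s) < a + M*\<epsilon>*(e - 1)"
      using est[OF s(1) zle] unfolding e_def r_def by (simp add: abs_less_iff)
    obtain \<xi> where "xe s - xe \<tau> = (s - \<tau>) * f (xe \<xi>) (ye \<xi>) (ze \<xi>)"
      using MVT2[OF s(1), of xe "\<lambda>t. f (xe t) (ye t) (ze t)"] dx by blast
    moreover have "f (xe \<xi>) (ye \<xi>) (ze \<xi>) < M" using bd by (simp add: abs_less_iff)
    ultimately have "xe s - xe \<tau> < r * M" unfolding r_def using r(1) r_def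
      by (metis mult_strict_left_mono)
    then have X: "xe s < - a + M * r" using init a_def by (simp add: algebra_simps)
    have "M * (r + 2*\<epsilon>) \<le> M * (r1 + 3*\<epsilon>)" using r M by (intro mult_left_mono) auto
    then have gap: "0 \<le> a - 2*M*\<epsilon> - M*r" using key1 by (simp add: algebra_simps)
    have "M*\<epsilon> > 0" using M eps by simp
    have "(a - M*\<epsilon> - M*r) * (e - 1) \<ge> (a - M*\<epsilon> - M*r) * (r/\<epsilon>)"
      using e1 gap \<open>M*\<epsilon> > 0\<close> by (intro mult_left_mono) auto
    moreover have "(a - M*\<epsilon> - M*r) * (r/\<epsilon>) - M*r = (r/\<epsilon>) * (a - 2*M*\<epsilon> - M*r)"
      using eps by (simp add: field_simps)
    moreover have "(r/\<epsilon>) * (a - 2*M*\<epsilon> - M*r) \<ge> 0" using gap r eps by simp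
    ultimately have F: "e * M * r \<le> (a - M*\<epsilon>) * (e - 1)"
      by (simp add: algebra_simps)
    have "e * ze s < e * xe s + a + M*\<epsilon>*(e-1)" using E by (simp add: algebra_simps)
    also have "\<dots> < e * (-a + M*r) + a + M*\<epsilon>*(e-1)" using X epos by simp
    also have "\<dots> \<le> 0" using F by (simp add: algebra_simps)
    finally show ?thesis using epos by (simp add: mult_less_0_iff)
  qed
  obtain d where d: "d > 0" "\<And>h. h > 0 \<Longrightarrow> h < d \<Longrightarrow> ze (\<tau> + h) < 0"
  proof -
    have "(xe \<tau> + \<bar>ze \<tau>\<bar>) / \<epsilon> < 0" using init x0 eps by (simp add: divide_neg_pos)
    from has_real_derivative_neg_dec_right[OF dz[of \<tau>] this] init show ?thesis using that by auto
  qed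
  have near: "ze q < 0" if "\<tau> < q" "q < \<tau> + d" for q
    using d(2)[of "q - \<tau>"] that by simp
  have zneg: "ze s < 0" if s: "\<tau> < s" "s \<le> t2" for s
  proof (rule ccontr)
    assume "\<not> ze s < 0"
    then have zs: "0 \<le> ze s" by simp
    have sd: "\<tau> + d/2 < s" using near[of s] s zs d(1) by (cases "s < \<tau> + d") auto
    have zd: "ze (\<tau> + d/2) < 0" using near d(1) by simp
    define K where "K = {q \<in> {\<tau> + d/2..s}. ze q \<le> 0} \<inter> {q \<in> {\<tau> + d/2..s}. 0 \<le> ze q}"
    have Kne: "K \<noteq> {}"
    proof -
      obtain r where "r \<ge> \<tau> + d/2" "r \<le> s" "ze r = 0"
        using IVT'[of ze "\<tau> + d/2" 0 s] zd zs sd cz by auto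
      then show ?thesis unfolding K_def by auto
    qed
    have Kc: "closed K" unfolding K_def
      by (intro closed_Int continuous_on_closed_Collect_le cz continuous_on_const closed_atLeastAtMost)
    have Kb: "bdd_below K" unfolding K_def by (auto intro: bdd_belowI[of _ "\<tau>"])
    define s0 where "s0 = Inf K"
    have s0K: "s0 \<in> K" unfolding s0_def using closed_contains_Inf[OF Kne Kb Kc] .
    then have s0: "\<tau> + d/2 \<le> s0" "s0 \<le> s" "ze s0 = 0" unfolding K_def by auto
    have s0min: "s0 \<le> q" if "q \<in> K" for q unfolding s0_def using cInf_lower[OF that Kb] .
    have "ze s0 < 0"
    proof (rule zneg1)
      show "\<tau> < s0" using s0 d by simp
      show "s0 \<le> t2" using s0 s by simp
      fix q assume q: "\<tau> \<le> q" "q \<le> s0"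
      show "ze q \<le> 0"
      proof (cases "q < \<tau> + d/2")
        case True
        then show ?thesis using near[of q] init q d by (cases "q = \<tau>") auto
      next
        case False
        show ?thesis
        proof (rule ccontr)
          assume "\<not> ze q \<le> 0"
          then obtain r where r: "r \<ge> \<tau> + d/2" "r \<le> q" "ze r = 0"
            using IVT'[of ze "\<tau> + d/2" 0 q] zd False cz by auto
          then have "r \<in> K" using q s0 unfolding K_def by auto
          then have "s0 \<le> r" by (rule s0min)
          then have "r = q" using r q by simp
          then show False using r \<open>\<not> ze q \<le> 0\<close> by simp
        qed
      qed
    qed
    then show False using s0 by simp
  qed
  define S where "S = {Tr} \<union> {t. t > \<tau> \<and> ze t = 0}"
  have Sb: "bdd_below S" unfolding S_def using tauTr by (auto intro: bdd_belowI[of _ "\<tau>"])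
  have t2S: "t2 \<le> Inf S"
  proof (rule cInf_greatest)
    show "S \<noteq> {}" unfolding S_def by simp
    fix x assume "x \<in> S"
    then show "t2 \<le> x" unfolding S_def using key2 t2_def zneg[of x] by (cases "x \<le> t2") auto
  qed
  have zle: "ze q \<le> 0" if "\<tau> \<le> q" "q \<le> Inf S" for q
  proof (cases "q \<le> t2")
    case True
    then show ?thesis using zneg[of q] init that by (cases "q = \<tau>") auto
  next
    case False
    show ?thesis
    proof (rule ccontr)
      assume nq: "\<not> ze q \<le> 0"
      have "ze t2 < 0" using zneg[of t2] r1pos eps t2_def by simp
      then obtain r where r: "r \<ge> t2" "r \<le> q" "ze r = 0"
        using IVT'[of ze t2 0 q] False nq cz by auto
      then have "r \<noteq> q" using nq by auto
      have "r > \<tau>" using r r1pos eps t2_def by simp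
      then have "r \<in> S" unfolding S_def using r by simp
      then have "Inf S \<le> r" using cInf_lower Sb by blast
      then show False using r \<open>r \<noteq> q\<close> that by simp
    qed
  qed
  have final: "\<bar>ze t - xe t\<bar> < 2 * M * \<epsilon>" if t: "\<tau> + r1 \<le> t" "t \<le> Inf S" for t
  proof -
    have tt: "\<tau> < t" using t r1pos by simp
    define e where "e = exp ((t-\<tau>)/\<epsilon>)"
    have E: "\<bar>e * (ze t - xe t) - a\<bar> < M * \<epsilon> * (e - 1)"
      using est[OF tt] zle t unfolding e_def by auto
    have epos: "e > 0" unfolding e_def by simp
    have "exp (r1/\<epsilon>) = k/\<epsilon>" unfolding r1_def using eps k by simp
    moreover have "exp (r1/\<epsilon>) \<le> e" unfolding e_def using t eps by (simp add: divide_right_mono)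
    ultimately have "k/\<epsilon> \<le> e" by simp
    then have "k \<le> \<epsilon> * e" using eps by (simp add: field_simps)
    then have "M * k \<le> M * (\<epsilon> * e)" using M by simp
    then have "a \<le> M * \<epsilon> * e" unfolding k_def using M by simp
    moreover have "M * \<epsilon> * (e - 1) = M * \<epsilon> * e - M * \<epsilon>" by (simp add: algebra_simps)
    moreover have "M * \<epsilon> > 0" using M eps by simp
    moreover have "\<bar>e * (ze t - xe t)\<bar> \<le> \<bar>e * (ze t - xe t) - a\<bar> + \<bar>a\<bar>" using abs_triangle_ineq[of "e * (ze t - xe t) - a" a] by simp
    ultimately have "\<bar>e * (ze t - xe t)\<bar> < M * \<epsilon> * e + M * \<epsilon> * e" using E a by linarith
    also have "\<bar>e * (ze t - xe t)\<bar> = e * \<bar>ze t - xe t\<bar>" using epos by (simp add: abs_mult)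
    finally have "e * \<bar>ze t - xe t\<bar> < e * (2 * M * \<epsilon>)" by (simp add: algebra_simps)
    then show ?thesis using epos by simp
  qed
  show ?thesis using t1eq t2S final r1pos eps unfolding S_def t2_def by auto
qed



lemma vd_fst: "(\<phi> has_vector_derivative v) F \<Longrightarrow> ((\<lambda>t. fst (\<phi> t)) has_real_derivative fst v) F"
  unfolding has_vector_derivative_def has_field_derivative_def
proof -
  assume "(\<phi> has_derivative (\<lambda>x. x *\<^sub>R v)) F"
  from has_derivative_fst[OF this] have "((\<lambda>t. fst (\<phi> t)) has_derivative (\<lambda>x. x * fst v)) F" by simp
  moreover have "(\<lambda>x. x * fst v) = (*) (fst v)" by (rule ext) simp
  ultimately show "((\<lambda>t. fst (\<phi> t)) has_derivative (*) (fst v)) F" by simp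
qed

lemma vd_snd: "(\<phi> has_vector_derivative v) F \<Longrightarrow> ((\<lambda>t. snd (\<phi> t)) has_real_derivative snd v) F"
  unfolding has_vector_derivative_def has_field_derivative_def
proof -
  assume "(\<phi> has_derivative (\<lambda>x. x *\<^sub>R v)) F"
  from has_derivative_snd[OF this] have "((\<lambda>t. snd (\<phi> t)) has_derivative (\<lambda>x. x * snd v)) F" by simp
  moreover have "(\<lambda>x. x * snd v) = (*) (snd v)" by (rule ext) simp
  ultimately show "((\<lambda>t. snd (\<phi> t)) has_derivative (*) (snd v)) F" by simp
qed

lemma ode_unique:
  fixes H :: "real \<times> real \<Rightarrow> real \<times> real" and \<phi> \<psi> :: "real \<Rightarrow> real \<times> real"
  assumes lip: "\<And>q q'. norm (H q - H q') \<le> L * norm (q - q')" and L: "0 \<le> L"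
    and d1: "\<And>t. (\<phi> has_vector_derivative H (\<phi> t)) (at t)"
    and d2: "\<And>t. (\<psi> has_vector_derivative H (\<psi> t)) (at t)"
    and i: "\<phi> 0 = \<psi> 0"
  shows "\<phi> t = \<psi> t"
proof -
  define u where "u t = (fst (\<phi> t) - fst (\<psi> t))^2 + (snd (\<phi> t) - snd (\<psi> t))^2" for t
  define u' where "u' t = 2 * ((\<phi> t - \<psi> t) \<bullet> (H (\<phi> t) - H (\<psi> t)))" for t
  have un: "u t = (norm (\<phi> t - \<psi> t))^2" for t
    unfolding u_def power2_norm_eq_inner by (simp add: inner_prod_def power2_eq_square)
  have du: "(u has_real_derivative u' t) (at t)" for t
  proof -
    have "(u has_real_derivative
        2 * (fst (\<phi> t) - fst (\<psi> t)) * (fst (H (\<phi> t)) - fst (H (\<psi> t)))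
      + 2 * (snd (\<phi> t) - snd (\<psi> t)) * (snd (H (\<phi> t)) - snd (H (\<psi> t)))) (at t)"
      unfolding u_def[abs_def]
      by (auto simp: algebra_simps intro!: derivative_eq_intros vd_fst[OF d1] vd_fst[OF d2] vd_snd[OF d1] vd_snd[OF d2])
    moreover have "2 * (fst (\<phi> t) - fst (\<psi> t)) * (fst (H (\<phi> t)) - fst (H (\<psi> t)))
      + 2 * (snd (\<phi> t) - snd (\<psi> t)) * (snd (H (\<phi> t)) - snd (H (\<psi> t))) = u' t"
      unfolding u'_def by (simp add: inner_prod_def algebra_simps)
    ultimately show ?thesis by simp
  qed
  have ub: "\<bar>u' t\<bar> \<le> 2 * L * u t" for t
  proof -
    have "\<bar>u' t\<bar> \<le> 2 * (norm (\<phi> t - \<psi> t) * norm (H (\<phi> t) - H (\<psi> t)))"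
      unfolding u'_def using Cauchy_Schwarz_ineq2 by (simp add: abs_mult)
    also have "\<dots> \<le> 2 * (norm (\<phi> t - \<psi> t) * (L * norm (\<phi> t - \<psi> t)))"
      using lip by (intro mult_left_mono) auto
    finally show ?thesis unfolding un by (simp add: power2_eq_square algebra_simps)
  qed
  have u0: "u 0 = 0" unfolding u_def using i by simp
  have upos: "u s \<ge> 0" for s unfolding u_def by simp
  have "u t \<le> 0"
  proof (cases "0 \<le> t")
    case True
    define V where "V s = exp (- (2 * L * s)) * u s" for s
    have "V t \<le> V 0"
    proof (rule DERIV_nonpos_imp_nonincreasing[OF True])
      fix x
      have "(V has_real_derivative exp (- (2 * L * x)) * (u' x - 2 * L * u x)) (at x)"
        unfolding V_def[abs_def] by (auto intro!: derivative_eq_intros du simp: algebra_simps)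
      moreover have "exp (- (2 * L * x)) * (u' x - 2 * L * u x) \<le> 0"
        using ub[of x] by (intro mult_nonneg_nonpos) auto
      ultimately show "\<exists>y. (V has_real_derivative y) (at x) \<and> y \<le> 0" by blast
    qed
    then show ?thesis using u0 unfolding V_def by (simp add: mult_le_0_iff)
  next
    case False
    define W where "W s = exp (2 * L * s) * u s" for s
    have "W t \<le> W 0"
    proof (rule DERIV_nonneg_imp_nondecreasing[of t 0 W])
      show "t \<le> 0" using False by simp
      fix x
      have "(W has_real_derivative exp (2 * L * x) * (u' x + 2 * L * u x)) (at x)"
        unfolding W_def[abs_def] by (auto intro!: derivative_eq_intros du simp: algebra_simps)
      moreover have "exp (2 * L * x) * (u' x + 2 * L * u x) \<ge> 0"
        using ub[of x] by (intro mult_nonneg_nonneg) auto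
      ultimately show "\<exists>y. (W has_real_derivative y) (at x) \<and> 0 \<le> y" by blast
    qed
    then show ?thesis using u0 unfolding W_def by (simp add: mult_le_0_iff)
  qed
  then have "norm (\<phi> t - \<psi> t) = 0" using un[of t] upos[of t] by simp
  then show ?thesis by simp
qed

primrec pic :: "(real \<times> real \<Rightarrow> real \<times> real) \<Rightarrow> real \<times> real \<Rightarrow> nat \<Rightarrow> real \<Rightarrow> real \<times> real" where
  "pic H p 0 = (\<lambda>t. p)"
| "pic H p (Suc n) = (\<lambda>t. p + integral {0..t} (\<lambda>s. H (pic H p n s)))"

lemma int_pow:
  assumes "0 \<le> (t::real)"
  shows "((\<lambda>s. c * s^n / fact n) has_integral c * t^(Suc n) / fact (Suc n)) {0..t}"
proof -
  have "((\<lambda>s. c * s^n / fact n) has_integral (\<lambda>s. c * s^(Suc n) / fact (Suc n)) t - (\<lambda>s. c * s^(Suc n) / fact (Suc n)) 0) {0..t}"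
  proof (rule fundamental_theorem_of_calculus[OF assms])
    fix x :: real
    have "((\<lambda>s. c * s^(Suc n) / fact (Suc n)) has_real_derivative c * (real (Suc n) * x^n) / fact (Suc n)) (at x within {0..t})"
      using DERIV_cdivide[OF DERIV_cmult[OF DERIV_pow[of "Suc n" x "{0..t}"]], of c "fact (Suc n)"] by simp
    moreover have "c * (real (Suc n) * x^n) / fact (Suc n) = c * x^n / fact n"
    proof -
      have f: "(fact (Suc n)::real) = real (Suc n) * fact n" by (rule fact_Suc)
      have "real (Suc n) \<noteq> 0" "(fact n :: real) \<noteq> 0" by auto
      then show ?thesis unfolding f by (simp add: divide_simps)
    qed
    ultimately show "((\<lambda>s. c * s^(Suc n) / fact (Suc n)) has_vector_derivative c * x^n / fact n) (at x within {0..t})"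
      by (simp add: has_real_derivative_iff_has_vector_derivative)
  qed
  then show ?thesis by simp
qed

lemma ode_exist_half:
  fixes H :: "real \<times> real \<Rightarrow> real \<times> real"
  assumes lip: "\<And>q q'. norm (H q - H q') \<le> L * norm (q - q')" and L: "0 < L"
    and bd: "\<And>q. norm (H q) \<le> B"
  shows "\<exists>\<phi>. \<phi> 0 = p \<and> (\<forall>t\<ge>0. (\<phi> has_vector_derivative H (\<phi> t)) (at t within {0..}))"
proof -
  have contH: "continuous_on UNIV H"
  proof (rule lipschitz_on_continuous_on)
    show "L-lipschitz_on UNIV H" unfolding lipschitz_on_def using L lip by (simp add: dist_norm)
  qed
  have B: "0 \<le> B" using bd[of 0] norm_ge_zero order_trans by blast
  define P where "P = pic H p"
  have cont: "continuous_on {0..R} (P n)" for n R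
  proof (induction n)
    case 0 then show ?case unfolding P_def by simp
  next
    case (Suc n)
    have "continuous_on {0..R} (\<lambda>s. H (P n s))"
      using continuous_on_compose2[OF contH Suc] by auto
    then have "(\<lambda>s. H (P n s)) integrable_on {0..R}" by (rule integrable_continuous_interval)
    then have "continuous_on {0..R} (\<lambda>t. integral {0..t} (\<lambda>s. H (P n s)))"
      by (rule indefinite_integral_continuous_1)
    then show ?case unfolding P_def by (auto intro!: continuous_intros)
  qed
  have integ: "(\<lambda>s. H (P n s)) integrable_on {0..t}" for n t
    by (rule integrable_continuous_interval, rule continuous_on_compose2[OF contH cont]) auto
  have bound: "norm (P (Suc n) t - P n t) \<le> B * L^n * t^(Suc n) / fact (Suc n)" if "0 \<le> t" for n t
    using that
  proof (induction n arbitrary: t)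
    case 0
    have "norm (integral {0..t} (\<lambda>s. H p)) \<le> integral {0..t} (\<lambda>s. B * s^0 / fact 0)"
      using bd int_pow[OF 0, of B 0] by (intro integral_norm_bound_integral) (auto simp: has_integral_integrable)
    also have "\<dots> = B * t^(Suc 0) / fact (Suc 0)" using int_pow[OF 0, of B 0] by (rule integral_unique)
    finally show ?case unfolding P_def by simp
  next
    case (Suc n)
    have "P (Suc (Suc n)) t - P (Suc n) t = integral {0..t} (\<lambda>s. H (P (Suc n) s) - H (P n s))"
    proof -
      have "integral {0..t} (\<lambda>s. H (P (Suc n) s) - H (P n s)) = integral {0..t} (\<lambda>s. H (P (Suc n) s)) - integral {0..t} (\<lambda>s. H (P n s))"
        by (rule Henstock_Kurzweil_Integration.integral_diff[OF integ integ])
      moreover have "P (Suc (Suc n)) t - P (Suc n) t = integral {0..t} (\<lambda>s. H (P (Suc n) s)) - integral {0..t} (\<lambda>s. H (P n s))"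
        by (simp add: P_def)
      ultimately show ?thesis by simp
    qed
    also have "norm \<dots> \<le> integral {0..t} (\<lambda>s. (B * L^(Suc n)) * s^(Suc n) / fact (Suc n))"
    proof (intro integral_norm_bound_integral)
      show "(\<lambda>s. H (P (Suc n) s) - H (P n s)) integrable_on {0..t}" by (intro integrable_diff integ)
      show "(\<lambda>s. (B * L^(Suc n)) * s^(Suc n) / fact (Suc n)) integrable_on {0..t}"
        using int_pow[OF Suc.prems, of "B * L^(Suc n)" "Suc n"] by (rule has_integral_integrable)
      fix s assume s: "s \<in> {0..t}"
      have "norm (H (P (Suc n) s) - H (P n s)) \<le> L * norm (P (Suc n) s - P n s)" by (rule lip)
      also have "\<dots> \<le> L * (B * L^n * s^(Suc n) / fact (Suc n))"
        using Suc.IH[of s] s L by (intro mult_left_mono) auto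
      also have "\<dots> = (B * L^(Suc n)) * s^(Suc n) / fact (Suc n)" by simp
      finally show "norm (H (P (Suc n) s) - H (P n s)) \<le> (B * L^(Suc n)) * s^(Suc n) / fact (Suc n)" .
    qed
    also have "\<dots> = B * L^(Suc n) * t^(Suc (Suc n)) / fact (Suc (Suc n))"
      using int_pow[OF Suc.prems, of "B * L^(Suc n)" "Suc n"] by (rule integral_unique)
    finally show ?case .
  qed
  define D where "D i t = P (Suc i) t - P i t" for i t
  define \<phi> where "\<phi> t = p + (\<Sum>i. D i t)" for t
  have Psum: "P n = (\<lambda>t. p + (\<Sum>i<n. D i t))" for n
  proof
    fix t
    have "(\<Sum>i<n. D i t) = P n t - P 0 t" unfolding D_def by (rule sum_lessThan_telescope)
    then show "P n t = p + (\<Sum>i<n. D i t)" by (simp add: P_def)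
  qed
  have ul: "uniform_limit {0..R} P \<phi> sequentially" for R
  proof -
    define Mi where "Mi i = B * L^i * R^(Suc i) / fact (Suc i)" for i
    have "uniform_limit {0..R} (\<lambda>n t. \<Sum>i<n. D i t) (\<lambda>t. \<Sum>i. D i t) sequentially"
    proof (rule Weierstrass_m_test)
      fix i t assume t: "t \<in> {0..R}"
      have "norm (D i t) \<le> B * L^i * t^(Suc i) / fact (Suc i)" unfolding D_def using bound t by auto
      also have "\<dots> \<le> B * L^i * R^(Suc i) / fact (Suc i)"
        using t B L by (intro divide_right_mono mult_left_mono power_mono) auto
      finally show "norm (D i t) \<le> Mi i" unfolding Mi_def .
    next
      have "summable (\<lambda>i. inverse (fact (i + 1)) * (L*R)^(i + 1))"
        by (rule summable_ignore_initial_segment[OF summable_exp])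
      then have "summable (\<lambda>i. (B / L) * (inverse (fact (i + 1)) * (L*R)^(i + 1)))"
        by (rule summable_mult)
      moreover have "(B / L) * (inverse (fact (i + 1)) * (L*R)^(i + 1)) = Mi i" for i
        unfolding Mi_def using L by (simp add: power_mult_distrib field_simps)
      ultimately show "summable Mi" by simp
    qed
    then have "uniform_limit {0..R} (\<lambda>n t. p + (\<Sum>i<n. D i t)) (\<lambda>t. p + (\<Sum>i. D i t)) sequentially"
      by (intro uniform_limit_add uniform_limit_const)
    then show ?thesis unfolding \<phi>_def Psum[symmetric] by simp
  qed
  have cphi: "continuous_on {0..R} \<phi>" for R
    by (rule uniform_limit_theorem[OF always_eventually ul[of R]]) (auto intro: cont)
  have cHphi: "continuous_on {0..R} (\<lambda>s. H (\<phi> s))" for R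
    using continuous_on_compose2[OF contH cphi] by auto
  have inteq: "\<phi> t = p + integral {0..t} (\<lambda>s. H (\<phi> s))" if t: "0 \<le> t" for t
  proof -
    have l1: "(\<lambda>n. P (Suc n) t) \<longlonglongrightarrow> \<phi> t"
      using LIMSEQ_Suc[OF tendsto_uniform_limitI[OF ul[of t]]] t by auto
    have l2: "(\<lambda>n. integral {0..t} (\<lambda>s. H (P n s))) \<longlonglongrightarrow> integral {0..t} (\<lambda>s. H (\<phi> s))"
    proof (rule LIMSEQ_I)
      fix r :: real assume r: "0 < r"
      define e where "e = r / (L * t + 1)"
      have Lt: "0 \<le> L * t" using L t by simp
      have e: "0 < e" unfolding e_def using r Lt by simp
      have "\<forall>\<^sub>F n in sequentially. \<forall>x\<in>{0..t}. dist (P n x) (\<phi> x) < e"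
        using ul[of t] e unfolding uniform_limit_iff by blast
      then obtain N where N: "\<And>n x. n \<ge> N \<Longrightarrow> x \<in> {0..t} \<Longrightarrow> dist (P n x) (\<phi> x) < e"
        unfolding eventually_sequentially by blast
      have "norm (integral {0..t} (\<lambda>s. H (P n s)) - integral {0..t} (\<lambda>s. H (\<phi> s))) < r" if n: "n \<ge> N" for n
      proof -
        have ii: "(\<lambda>s. H (\<phi> s)) integrable_on {0..t}" by (rule integrable_continuous_interval[OF cHphi])
        have "integral {0..t} (\<lambda>s. H (P n s)) - integral {0..t} (\<lambda>s. H (\<phi> s)) = integral {0..t} (\<lambda>s. H (P n s) - H (\<phi> s))"
          by (rule Henstock_Kurzweil_Integration.integral_diff[OF integ ii, symmetric])
        also have "norm \<dots> \<le> integral {0..t} (\<lambda>s. L * e)"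
        proof (rule integral_norm_bound_integral)
          show "(\<lambda>s. H (P n s) - H (\<phi> s)) integrable_on {0..t}" by (intro integrable_diff integ ii)
          show "(\<lambda>s. L * e) integrable_on {0..t}" by (rule integrable_const_ivl)
          fix s assume s: "s \<in> {0..t}"
          have "norm (H (P n s) - H (\<phi> s)) \<le> L * norm (P n s - \<phi> s)" by (rule lip)
          also have "\<dots> \<le> L * e" using N[OF n s] L by (intro mult_left_mono) (auto simp: dist_norm)
          finally show "norm (H (P n s) - H (\<phi> s)) \<le> L * e" .
        qed
        also have "integral {0..t} (\<lambda>s. L * e) = t * (L * e)" using t by simp
        also have "t * (L * e) < r"
        proof -
          have "t * (L * e) = (L * t) * r / (L * t + 1)" unfolding e_def by simp
          also have "\<dots> < r" using r Lt by (simp add: field_simps)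
          finally show ?thesis .
        qed
        finally show ?thesis .
      qed
      then show "\<exists>no. \<forall>n\<ge>no. norm (integral {0..t} (\<lambda>s. H (P n s)) - integral {0..t} (\<lambda>s. H (\<phi> s))) < r" by blast
    qed
    have "(\<lambda>n. P (Suc n) t) \<longlonglongrightarrow> p + integral {0..t} (\<lambda>s. H (\<phi> s))"
      unfolding P_def pic.simps by (intro tendsto_add tendsto_const l2[unfolded P_def])
    with l1 show ?thesis using LIMSEQ_unique by blast
  qed
  have "(\<phi> has_vector_derivative H (\<phi> t)) (at t within {0..})" if t: "0 \<le> t" for t
  proof -
    define R where "R = t + 1"
    have tR: "t \<in> {0..R}" using t R_def by simp
    have "((\<lambda>u. integral {0..u} (\<lambda>s. H (\<phi> s))) has_vector_derivative H (\<phi> t)) (at t within {0..R})"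
      by (rule integral_has_vector_derivative[OF cHphi tR])
    then have "((\<lambda>u. p + integral {0..u} (\<lambda>s. H (\<phi> s))) has_vector_derivative 0 + H (\<phi> t)) (at t within {0..R})"
      by (intro has_vector_derivative_add has_vector_derivative_const)
    then have "((\<lambda>u. p + integral {0..u} (\<lambda>s. H (\<phi> s))) has_vector_derivative H (\<phi> t)) (at t within {0..R})"
      by simp
    then have "(\<phi> has_vector_derivative H (\<phi> t)) (at t within {0..R})"
    proof (rule has_vector_derivative_transform[OF tR, rotated])
      fix x assume "x \<in> {0..R}"
      then show "\<phi> x = p + integral {0..x} (\<lambda>s. H (\<phi> s))" by (intro inteq) simp
    qed
    moreover have "at t within {0..R} = at t within {0..}"
      by (rule at_within_nhd[of t "{..<R}"]) (auto simp: R_def)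
    ultimately show ?thesis by simp
  qed
  then have D: "\<forall>t\<ge>0. (\<phi> has_vector_derivative H (\<phi> t)) (at t within {0..})" by blast
  have "\<phi> 0 = p + integral {0..0} (\<lambda>s. H (\<phi> s))" by (rule inteq) simp
  also have "integral {0..0} (\<lambda>s. H (\<phi> s)) = 0" by simp
  finally have "\<phi> 0 = p" by simp
  with D show ?thesis by (intro exI[of _ \<phi>] conjI)
qed

lemma ode_exist:
  fixes H :: "real \<times> real \<Rightarrow> real \<times> real"
  assumes lip: "\<And>q q'. norm (H q - H q') \<le> L * norm (q - q')" and L: "0 < L"
    and bd: "\<And>q. norm (H q) \<le> B"
  shows "\<exists>\<phi>. \<phi> 0 = p \<and> (\<forall>t. (\<phi> has_vector_derivative H (\<phi> t)) (at t))"
proof -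
  obtain \<phi>1 where p1: "\<phi>1 0 = p" and d1: "\<And>t. t \<ge> 0 \<Longrightarrow> (\<phi>1 has_vector_derivative H (\<phi>1 t)) (at t within {0..})"
    using ode_exist_half[OF lip L bd] by blast
  have lip2: "norm ((- H q) - (- H q')) \<le> L * norm (q - q')" for q q'
    using lip[of q q'] by (simp add: norm_minus_commute)
  have bd2: "norm (- H q) \<le> B" for q using bd[of q] by simp
  obtain \<phi>2 where p2: "\<phi>2 0 = p" and d2: "\<And>t. t \<ge> 0 \<Longrightarrow> (\<phi>2 has_vector_derivative - H (\<phi>2 t)) (at t within {0..})"
    using ode_exist_half[of "\<lambda>q. - H q", OF lip2 L bd2] by blast
  define \<Phi> where "\<Phi> t = (if t \<in> {0..} then \<phi>1 t else (\<lambda>t. \<phi>2 (-t)) t)" for t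
  have "(\<Phi> has_vector_derivative H (\<Phi> t)) (at t)" for t
  proof -
    have cS: "closure {0::real..} = {0..}" by simp
    have cT: "closure {..<0::real} = {..0}" by simp
    have g: "((\<lambda>t. \<phi>2 (-t)) has_vector_derivative H (\<phi>2 (-x))) (at x within {..0})" if "x \<le> 0" for x
    proof -
      have "((\<lambda>t. -t) has_vector_derivative -1) (at x within {..0})"
        by (auto intro!: derivative_eq_intros)
      moreover have "(\<phi>2 has_vector_derivative - H (\<phi>2 (-x))) (at (-x) within uminus ` {..0})"
      proof -
        have "uminus ` {..0::real} = {0..}" by (simp add: image_uminus_atMost)
        then show ?thesis using d2[of "-x"] that by simp
      qed
      ultimately have "((\<phi>2 \<circ> uminus) has_vector_derivative (-1) *\<^sub>R (- H (\<phi>2 (-x)))) (at x within {..0})"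
        by (rule vector_diff_chain_within)
      then show ?thesis by (simp add: o_def)
    qed
    have "((\<lambda>x. if x \<in> {0..} then \<phi>1 x else \<phi>2 (-x)) has_vector_derivative
      (if t \<in> {0..} then H (\<phi>1 t) else H (\<phi>2 (-t)))) (at t within UNIV)"
    proof (rule has_vector_derivative_If_within_closures[where T="{..<0}"])
      show "t \<in> {0..} \<union> {..<0}" by auto
      show "UNIV = {0::real..} \<union> {..<0}" by auto
      show "(\<phi>1 has_vector_derivative H (\<phi>1 t)) (at t within {0..} \<union> closure {0..} \<inter> closure {..<0})"
        if "t \<in> {0..} \<union> closure {0..} \<inter> closure {..<0}"
        using that d1[of t] by (simp add: cS cT Un_absorb2)
      show "((\<lambda>t. \<phi>2 (-t)) has_vector_derivative H (\<phi>2 (-t))) (at t within {..<0} \<union> closure {0..} \<inter> closure {..<0})"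
        if "t \<in> {..<0} \<union> closure {0..} \<inter> closure {..<0}"
      proof -
        have "{..<0::real} \<union> closure {0..} \<inter> closure {..<0} = {..0}" unfolding cS cT by auto
        then show ?thesis using that g[of t] by auto
      qed
      show "\<phi>1 t = \<phi>2 (-t)" "H (\<phi>1 t) = H (\<phi>2 (-t))" if "t \<in> closure {0..}" "t \<in> closure {..<0}"
        using that p1 p2 unfolding cS cT by auto
    qed
    moreover have "H (\<Phi> t) = (if t \<in> {0..} then H (\<phi>1 t) else H (\<phi>2 (-t)))" by (simp add: \<Phi>_def)
    moreover have "\<Phi> = (\<lambda>x. if x \<in> {0..} then \<phi>1 x else \<phi>2 (-x))" by (rule ext) (simp add: \<Phi>_def)
    ultimately show ?thesis by simp
  qed
  moreover have "\<Phi> 0 = p" unfolding \<Phi>_def using p1 by simp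
  ultimately show ?thesis by blast
qed



lemma lip3:
  fixes f :: "real \<Rightarrow> real \<Rightarrow> real \<Rightarrow> real" and h :: "real \<Rightarrow> real"
  assumes "L-lipschitz_on UNIV (\<lambda>(x, y, z). f x y z)"
    and hl: "\<And>x x'. \<bar>h x - h x'\<bar> \<le> \<bar>x - x'\<bar>"
  shows "\<bar>f (fst q) (snd q) (h (fst q)) - f (fst q') (snd q') (h (fst q'))\<bar> \<le> 3 * L * norm (q - q')"
proof -
  obtain x y x' y' where q: "q = (x, y)" "q' = (x', y')" by (cases q, cases q') auto
  have L: "0 \<le> L" using assms(1) lipschitz_on_def by blast
  have "dist (f x y (h x)) (f x' y' (h x')) \<le> L * dist (x, y, h x) (x', y', h x')"
    using lipschitz_onD[OF assms(1), of "(x, y, h x)" "(x', y', h x')"] by simp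
  moreover have "dist (x, y, h x) (x', y', h x') \<le> 3 * norm (q - q')"
  proof -
    have n1: "\<bar>x - x'\<bar> \<le> norm (q - q')" using norm_fst_le[of "x - x'" "y - y'"] q by simp
    have n2: "\<bar>y - y'\<bar> \<le> norm (q - q')" using norm_snd_le[of "y - y'" "x - x'"] q by simp
    have "dist (x, y, h x) (x', y', h x') = norm (x - x', y - y', h x - h x')" by (simp add: dist_norm)
    also have "\<dots> \<le> norm (x - x') + norm (y - y', h x - h x')" by (rule norm_Pair_le)
    also have "norm (y - y', h x - h x') \<le> norm (y - y') + norm (h x - h x')" by (rule norm_Pair_le)
    finally show ?thesis using n1 n2 hl[of x x'] by simp
  qed
  ultimately have "dist (f x y (h x)) (f x' y' (h x')) \<le> L * (3 * norm (q - q'))"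
    using L by (meson mult_left_mono order_trans)
  then show ?thesis using q by (simp add: dist_real_def)
qed

lemma flow_sol:
  fixes f g :: "real \<Rightarrow> real \<Rightarrow> real \<Rightarrow> real" and h :: "real \<Rightarrow> real"
  assumes lip_f: "\<exists>L. L-lipschitz_on UNIV (\<lambda>(x, y, z). f x y z)"
    and lip_g: "\<exists>L. L-lipschitz_on UNIV (\<lambda>(x, y, z). g x y z)"
    and bd_f: "\<forall>x y z. \<bar>f x y z\<bar> < M"
    and bd_g: "\<forall>x y z. \<bar>g x y z\<bar> < M"
    and hl: "\<And>x x'. \<bar>h x - h x'\<bar> \<le> \<bar>x - x'\<bar>"
  shows "flow2 (\<lambda>x y. f x y (h x)) (\<lambda>x y. g x y (h x)) p 0 = p \<and>
         is_sol2 (\<lambda>x y. f x y (h x)) (\<lambda>x y. g x y (h x)) (flow2 (\<lambda>x y. f x y (h x)) (\<lambda>x y. g x y (h x)) p)"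
proof -
  obtain Lf where Lf: "Lf-lipschitz_on UNIV (\<lambda>(x, y, z). f x y z)" using lip_f by blast
  obtain Lg where Lg: "Lg-lipschitz_on UNIV (\<lambda>(x, y, z). g x y z)" using lip_g by blast
  have Lf0: "0 \<le> Lf" "0 \<le> Lg" using Lf Lg lipschitz_on_def by blast+
  define F where "F = (\<lambda>x y. f x y (h x))"
  define G where "G = (\<lambda>x y. g x y (h x))"
  define H where "H q = (F (fst q) (snd q), G (fst q) (snd q))" for q
  define K where "K = 3 * Lf + 3 * Lg + 1"
  have K: "0 < K" using Lf0 K_def by simp
  have lip: "norm (H q - H q') \<le> K * norm (q - q')" for q q'
  proof -
    have "norm (H q - H q') \<le> norm (F (fst q) (snd q) - F (fst q') (snd q')) + norm (G (fst q) (snd q) - G (fst q') (snd q'))"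
      unfolding H_def using norm_Pair_le[of "F (fst q) (snd q) - F (fst q') (snd q')" "G (fst q) (snd q) - G (fst q') (snd q')"] by simp
    also have "\<dots> \<le> 3 * Lf * norm (q - q') + 3 * Lg * norm (q - q')"
      unfolding F_def G_def using lip3[OF Lf hl, of q q'] lip3[OF Lg hl, of q q'] by simp
    also have "\<dots> \<le> K * norm (q - q')" unfolding K_def by (simp add: algebra_simps)
    finally show ?thesis .
  qed
  have bd: "norm (H q) \<le> 2 * M" for q
  proof -
    have "norm (H q) \<le> norm (F (fst q) (snd q)) + norm (G (fst q) (snd q))" unfolding H_def by (rule norm_Pair_le)
    also have "\<dots> \<le> 2 * M"
    proof -
      have "\<bar>F (fst q) (snd q)\<bar> < M" "\<bar>G (fst q) (snd q)\<bar> < M" unfolding F_def G_def using bd_f bd_g by auto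
      then show ?thesis by simp
    qed
    finally show ?thesis .
  qed
  have sol: "is_sol2 F G \<phi> \<longleftrightarrow> (\<forall>t. (\<phi> has_vector_derivative H (\<phi> t)) (at t))" for \<phi>
    unfolding is_sol2_def H_def by simp
  obtain \<phi>0 where p0: "\<phi>0 0 = p" and d0: "\<forall>t. (\<phi>0 has_vector_derivative H (\<phi>0 t)) (at t)"
    using ode_exist[OF lip K bd] by blast
  have the: "(THE \<phi>. \<phi> 0 = p \<and> is_sol2 F G \<phi>) = \<phi>0"
  proof (rule the_equality)
    show "\<phi>0 0 = p \<and> is_sol2 F G \<phi>0" using p0 d0 sol by simp
    fix \<psi> assume "\<psi> 0 = p \<and> is_sol2 F G \<psi>"
    then have "\<psi> 0 = \<phi>0 0" "\<forall>t. (\<psi> has_vector_derivative H (\<psi> t)) (at t)" using p0 sol by auto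
    then show "\<psi> = \<phi>0" using ode_unique[OF lip less_imp_le[OF K]] d0 by (metis ext)
  qed
  have "flow2 F G p = \<phi>0" unfolding flow2_def the by simp
  then show ?thesis using p0 d0 sol unfolding F_def G_def by simp
qed



lemma lin2: "2 * xs - 2 * x0 < c + xs \<Longrightarrow> - xs < c \<Longrightarrow> - x0 < (c::real)"
  by linarith

theorem proposition2:
  fixes f g :: "real \<Rightarrow> real \<Rightarrow> real \<Rightarrow> real"
    and M Ta Tr \<tau> \<sigma> :: real
    and wa wr :: "real \<Rightarrow> real \<times> real"
  assumes lip_f: "\<exists>L. L-lipschitz_on UNIV (\<lambda>(x, y, z). f x y z)"
    and lip_g: "\<exists>L. L-lipschitz_on UNIV (\<lambda>(x, y, z). g x y z)"
    and bd_f: "\<forall>x y z. \<bar>f x y z\<bar> < M"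
    and bd_g: "\<forall>x y z. \<bar>g x y z\<bar> < M"
    and f0: "f 0 0 0 = 0"
    and g0: "g 0 0 0 > 0"
    and fy: "\<forall>y. y \<noteq> 0 \<longrightarrow> y * f 0 y 0 < 0"
  defines "wa \<equiv> flow2 (\<lambda>x y. f x y x) (\<lambda>x y. g x y x) (0, 0)"
    and "wr \<equiv> flow2 (\<lambda>x y. f x y (- x)) (\<lambda>x y. g x y (- x)) (0, 0)"
  assumes Ta: "Ta < \<tau>" and tau: "\<tau> < 0" and sigma: "0 < \<sigma>" and Tr: "\<sigma> < Tr"
    and neg_a: "\<forall>t. Ta < t \<and> t < 0 \<longrightarrow> fst (wa t) < 0"
    and neg_r: "\<forall>t. 0 < t \<and> t < Tr \<longrightarrow> fst (wr t) < 0"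
    and meet: "wa \<tau> = wr \<sigma>"
    and A: "(let xs = fst (wa \<tau>); ys = snd (wa \<tau>) in
              f xs ys xs * g xs ys (- xs) - f xs ys (- xs) * g xs ys xs) \<noteq> 0"
  shows "\<exists>\<delta>>0. \<forall>(U :: (real \<times> real) set) (u :: real \<times> real \<Rightarrow> real) tu v tv.
     open U \<and> connected U \<and> wa \<tau> \<in> U \<and> U \<subseteq> ball (wa \<tau>) \<delta> \<and>
     continuous_on U u \<and> continuous_on U tu \<and> continuous_on U v \<and> continuous_on U tv \<and>
     u (wa \<tau>) = 0 \<and> tu (wa \<tau>) = \<sigma> \<and> v (wa \<tau>) = 0 \<and> tv (wa \<tau>) = \<tau> \<and>
     (\<forall>p\<in>U. flow2 (\<lambda>x y. f x y x) (\<lambda>x y. g x y x) p (u p) = wr (tu p) \<and>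
             flow2 (\<lambda>x y. f x y (- x)) (\<lambda>x y. g x y (- x)) p (v p) = wa (tv p))
     \<longrightarrow>
     (\<exists>\<alpha>0>0. \<forall>\<alpha>. 0 < \<alpha> \<and> \<alpha> < \<alpha>0 \<longrightarrow>
       (\<forall>x0 y0. (x0, y0) \<in> U \<and> \<bar>u (x0, y0)\<bar> < \<alpha> / 2 \<and> \<bar>v (x0, y0)\<bar> < \<alpha> / 2 \<longrightarrow>
         (\<exists>\<epsilon>0>0. \<forall>\<epsilon>. 0 < \<epsilon> \<and> \<epsilon> < \<epsilon>0 \<longrightarrow>
           (\<forall>xe ye ze :: real \<Rightarrow> real.
              (\<forall>t. (xe has_real_derivative f (xe t) (ye t) (ze t)) (at t) \<and>
                   (ye has_real_derivative g (xe t) (ye t) (ze t)) (at t) \<and>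
                   (ze has_real_derivative (xe t + \<bar>ze t\<bar>) / \<epsilon>) (at t)) \<and>
              xe \<tau> = x0 \<and> ye \<tau> = y0 \<and> ze \<tau> = 0 \<longrightarrow>
              (let T = - Ta + Tr;
                   \<omega> = \<epsilon> * ln (T / \<epsilon>);
                   that = Inf ({Tr} \<union> {t. t > \<tau> \<and> ze t = 0});
                   t1 = \<tau> + \<epsilon> * ln (- x0 / (M * \<epsilon>))
               in t1 < \<tau> + \<omega> \<and> that > t1 \<and>
                  (\<forall>t. t1 \<le> t \<and> t \<le> that \<longrightarrow> \<bar>ze t - xe t\<bar> < 2 * M * \<epsilon>))))))"
  proof -
  have M: "0 < M" using bd_f by (metis abs_ge_zero le_less_trans)
  have fs: "flow2 (\<lambda>x y. f x y ((\<lambda>x. x) x)) (\<lambda>x y. g x y ((\<lambda>x. x) x)) (0,0) 0 = (0,0) \<and>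
         is_sol2 (\<lambda>x y. f x y ((\<lambda>x. x) x)) (\<lambda>x y. g x y ((\<lambda>x. x) x)) (flow2 (\<lambda>x y. f x y ((\<lambda>x. x) x)) (\<lambda>x y. g x y ((\<lambda>x. x) x)) (0,0))"
    by (rule flow_sol[OF lip_f lip_g bd_f bd_g]) simp
  then have wa0: "wa 0 = (0,0)" and wsol: "is_sol2 (\<lambda>x y. f x y x) (\<lambda>x y. g x y x) wa"
    unfolding wa_def by simp_all
  have dfst: "((\<lambda>t. fst (wa t)) has_real_derivative f (fst (wa t)) (snd (wa t)) (fst (wa t))) (at t)" for t
    using vd_fst[OF wsol[unfolded is_sol2_def, rule_format, of t]] by simp
  define xs where "xs = fst (wa \<tau>)"
  have xs: "xs < 0" using neg_a Ta tau xs_def by auto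
  obtain \<xi> where "fst (wa 0) - fst (wa \<tau>) = (0 - \<tau>) * f (fst (wa \<xi>)) (snd (wa \<xi>)) (fst (wa \<xi>))"
    using MVT2[OF tau, of "\<lambda>t. fst (wa t)" "\<lambda>t. f (fst (wa t)) (snd (wa t)) (fst (wa t))"] dfst by blast
  moreover have "f (fst (wa \<xi>)) (snd (wa \<xi>)) (fst (wa \<xi>)) < M" using bd_f by (simp add: abs_less_iff)
  ultimately have "- xs < (- \<tau>) * M" using wa0 tau xs_def by (metis add_0 diff_0 fst_conv mult_strict_left_mono neg_0_less_iff_less)
  moreover have "(- \<tau>) * M < (- Ta + Tr) * M" using M Ta sigma Tr by (intro mult_strict_right_mono) auto
  ultimately have xsT: "- xs < M * (- Ta + Tr)" by (simp add: mult.commute)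
  define \<delta> where "\<delta> = min (- xs / 2) ((M * (- Ta + Tr) + xs) / 2)"
  have \<delta>: "\<delta> > 0" unfolding \<delta>_def using xs xsT by simp
  show ?thesis
  proof (rule exI[of _ \<delta>], intro conjI \<delta> allI impI)
    fix U :: "(real \<times> real) set" and u :: "real \<times> real \<Rightarrow> real" and tu v tv
    assume H: "open U \<and> connected U \<and> wa \<tau> \<in> U \<and> U \<subseteq> ball (wa \<tau>) \<delta> \<and>
     continuous_on U u \<and> continuous_on U tu \<and> continuous_on U v \<and> continuous_on U tv \<and>
     u (wa \<tau>) = 0 \<and> tu (wa \<tau>) = \<sigma> \<and> v (wa \<tau>) = 0 \<and> tv (wa \<tau>) = \<tau> \<and>
     (\<forall>p\<in>U. flow2 (\<lambda>x y. f x y x) (\<lambda>x y. g x y x) p (u p) = wr (tu p) \<and>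
             flow2 (\<lambda>x y. f x y (- x)) (\<lambda>x y. g x y (- x)) p (v p) = wa (tv p))"
    then have Ub: "U \<subseteq> ball (wa \<tau>) \<delta>" by blast
    show "\<exists>\<alpha>0>0. \<forall>\<alpha>. 0 < (\<alpha>::real) \<and> \<alpha> < \<alpha>0 \<longrightarrow>
       (\<forall>x0 y0. (x0, y0) \<in> U \<and> \<bar>u (x0, y0)\<bar> < \<alpha> / 2 \<and> \<bar>v (x0, y0)\<bar> < \<alpha> / 2 \<longrightarrow>
         (\<exists>\<epsilon>0>0. \<forall>\<epsilon>. 0 < \<epsilon> \<and> \<epsilon> < \<epsilon>0 \<longrightarrow>
           (\<forall>xe ye ze :: real \<Rightarrow> real.
              (\<forall>t. (xe has_real_derivative f (xe t) (ye t) (ze t)) (at t) \<and>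
                   (ye has_real_derivative g (xe t) (ye t) (ze t)) (at t) \<and>
                   (ze has_real_derivative (xe t + \<bar>ze t\<bar>) / \<epsilon>) (at t)) \<and>
              xe \<tau> = x0 \<and> ye \<tau> = y0 \<and> ze \<tau> = 0 \<longrightarrow>
              (let T = - Ta + Tr;
                   \<omega> = \<epsilon> * ln (T / \<epsilon>);
                   that = Inf ({Tr} \<union> {t. t > \<tau> \<and> ze t = 0});
                   t1 = \<tau> + \<epsilon> * ln (- x0 / (M * \<epsilon>))
               in t1 < \<tau> + \<omega> \<and> that > t1 \<and>
                  (\<forall>t. t1 \<le> t \<and> t \<le> that \<longrightarrow> \<bar>ze t - xe t\<bar> < 2 * M * \<epsilon>)))))"
    proof (rule exI[of _ 1], intro conjI zero_less_one allI impI)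
      fix \<alpha> x0 y0 :: real assume "0 < \<alpha> \<and> \<alpha> < 1"
      assume "(x0, y0) \<in> U \<and> \<bar>u (x0, y0)\<bar> < \<alpha> / 2 \<and> \<bar>v (x0, y0)\<bar> < \<alpha> / 2"
      then have "dist (wa \<tau>) (x0, y0) < \<delta>" using Ub by auto
      then have "\<bar>xs - x0\<bar> < \<delta>" unfolding xs_def
        using norm_fst_le[of "fst (wa \<tau>) - x0" "snd (wa \<tau>) - y0"]
        by (metis dist_norm fst_conv le_less_trans prod.collapse diff_Pair real_norm_def)
      then have d1: "\<bar>xs - x0\<bar> < - xs / 2" and d2: "\<bar>xs - x0\<bar> < (M * (- Ta + Tr) + xs) / 2" unfolding \<delta>_def by auto
      have "x0 - xs < - xs / 2" using d1 abs_less_iff by (metis minus_diff_eq)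
      then have x0: "x0 < 0" using xs by linarith
      have "xs - x0 < (M * (- Ta + Tr) + xs) / 2" using d2 abs_less_iff by blast
      then have "2 * xs - 2 * x0 < M * (- Ta + Tr) + xs" by (simp add: field_simps)
      then have x0T: "- x0 < M * (- Ta + Tr)" using xsT by (rule lin2)
      define k where "k = - x0 / M"
      have k: "0 < k" "k < - Ta + Tr" unfolding k_def using x0 x0T M by (auto simp: field_simps)
      define \<epsilon>0 where "\<epsilon>0 = (min k (Tr - \<tau>))^2 / (16 * k)"
      have \<epsilon>0: "0 < \<epsilon>0" unfolding \<epsilon>0_def using k tau sigma Tr by simp
      show "\<exists>\<epsilon>0>0. \<forall>\<epsilon>. 0 < \<epsilon> \<and> \<epsilon> < \<epsilon>0 \<longrightarrow>
           (\<forall>xe ye ze :: real \<Rightarrow> real.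
              (\<forall>t. (xe has_real_derivative f (xe t) (ye t) (ze t)) (at t) \<and>
                   (ye has_real_derivative g (xe t) (ye t) (ze t)) (at t) \<and>
                   (ze has_real_derivative (xe t + \<bar>ze t\<bar>) / \<epsilon>) (at t)) \<and>
              xe \<tau> = x0 \<and> ye \<tau> = y0 \<and> ze \<tau> = 0 \<longrightarrow>
              (let T = - Ta + Tr;
                   \<omega> = \<epsilon> * ln (T / \<epsilon>);
                   that = Inf ({Tr} \<union> {t. t > \<tau> \<and> ze t = 0});
                   t1 = \<tau> + \<epsilon> * ln (- x0 / (M * \<epsilon>))
               in t1 < \<tau> + \<omega> \<and> that > t1 \<and>
                  (\<forall>t. t1 \<le> t \<and> t \<le> that \<longrightarrow> \<bar>ze t - xe t\<bar> < 2 * M * \<epsilon>)))"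
      proof (rule exI[of _ \<epsilon>0], intro conjI \<epsilon>0 allI impI)
        fix \<epsilon> :: real and xe ye ze :: "real \<Rightarrow> real"
        assume e: "0 < \<epsilon> \<and> \<epsilon> < \<epsilon>0"
        assume S: "(\<forall>t. (xe has_real_derivative f (xe t) (ye t) (ze t)) (at t) \<and>
                   (ye has_real_derivative g (xe t) (ye t) (ze t)) (at t) \<and>
                   (ze has_real_derivative (xe t + \<bar>ze t\<bar>) / \<epsilon>) (at t)) \<and>
              xe \<tau> = x0 \<and> ye \<tau> = y0 \<and> ze \<tau> = 0"
        have main: "Inf ({Tr} \<union> {t. t > \<tau> \<and> ze t = 0}) > \<tau> + \<epsilon> * ln (- x0 / (M * \<epsilon>)) \<and>
          (\<forall>t. \<tau> + \<epsilon> * ln (- x0 / (M * \<epsilon>)) \<le> t \<and> t \<le> Inf ({Tr} \<union> {t. t > \<tau> \<and> ze t = 0})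
             \<longrightarrow> \<bar>ze t - xe t\<bar> < 2 * M * \<epsilon>)"
        proof (rule eps_main[of f M x0 \<tau> Tr \<epsilon> xe ye ze])
          show "\<forall>x y z. \<bar>f x y z\<bar> < M" by (rule bd_f)
          show "x0 < 0" by (rule x0)
          show "\<tau> < Tr" using tau sigma Tr by simp
          show "0 < \<epsilon>" using e by simp
          show "\<epsilon> \<le> (min (-x0/M) (Tr - \<tau>))^2 / (16 * (-x0/M))" using e unfolding \<epsilon>0_def k_def by simp
          show "\<And>t. (xe has_real_derivative f (xe t) (ye t) (ze t)) (at t)" using S by blast
          show "\<And>t. (ze has_real_derivative (xe t + \<bar>ze t\<bar>) / \<epsilon>) (at t)" using S by blast
          show "xe \<tau> = x0" "ze \<tau> = 0" using S by auto
        qed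
        have "ln (- x0 / (M * \<epsilon>)) < ln ((- Ta + Tr) / \<epsilon>)"
        proof (subst ln_less_cancel_iff)
          have "0 < M * \<epsilon>" using M e by simp
          then show "0 < - x0 / (M * \<epsilon>)" using x0 by (intro divide_pos_pos) auto
          show "0 < (- Ta + Tr) / \<epsilon>" using k e by simp
          have "- x0 / (M * \<epsilon>) = k / \<epsilon>" unfolding k_def by simp
          then show "- x0 / (M * \<epsilon>) < (- Ta + Tr) / \<epsilon>" using k e by (simp add: divide_strict_right_mono)
        qed
        then have "\<tau> + \<epsilon> * ln (- x0 / (M * \<epsilon>)) < \<tau> + \<epsilon> * ln ((- Ta + Tr) / \<epsilon>)" using e by simp
        then show "let T = - Ta + Tr;
                   \<omega> = \<epsilon> * ln (T / \<epsilon>);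
                   that = Inf ({Tr} \<union> {t. t > \<tau> \<and> ze t = 0});
                   t1 = \<tau> + \<epsilon> * ln (- x0 / (M * \<epsilon>))
               in t1 < \<tau> + \<omega> \<and> that > t1 \<and>
                  (\<forall>t. t1 \<le> t \<and> t \<le> that \<longrightarrow> \<bar>ze t - xe t\<bar> < 2 * M * \<epsilon>)"
          using main unfolding Let_def by blast
      qed
    qed
  qed
qed


end
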